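(* Let $m\ge1$ and $Q=T_{(2^m)}$. Then $K_Q(2)$ is isomorphic to the dihedral group $D_{2^{m+1}}$ of order $2^{m+1}$.
   Context: Let $\{|0\rangle,|1\rangle\}$ be the computational basis of $\mathbb{C}^2$ and $X$ the Pauli shift $X|q\rangle=|q+1 \bmod 2\rangle$. For $\xi:\mathbb{Z}_2\to U(1)$ let $S_\xi=\mathrm{diag}(\xi(0),\xi(1))$; $T=\{S_\xi:\xi(0)\xi(1)=1\}$ and $T_{(2^m)}=\{S\in T:S^{2^m}=\mathbbm{1}\}$. $K_Q(2)$ is the subgroup of $SU(2)$ generated by all $S_\xi X^b$ with $S_\xi\in Q$, $b\in\mathbb{Z}_2$. $D_{2^{m+1}}$ denotes the dihedral group $\langle r,s\mid r^{2^m}=s^2=1,srs=r^{-1}\rangle$. *)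

theory Defs
  imports "HOL-Analysis.Analysis" "HOL-Algebra.Algebra"
begin

definition mat_monoid :: "(complex^2^2) monoid" where
  "mat_monoid = \<lparr>carrier = UNIV, mult = (\<lambda>A B. A ** B), one = mat 1\<rparr>"

definition GL2 :: "(complex^2^2) monoid" where
  "GL2 = units_of mat_monoid"

definition Xshift :: "complex^2^2" where
  "Xshift = (\<chi> i j. if i = j + 1 then 1 else 0)"

definition Sdiag :: "(2 \<Rightarrow> complex) \<Rightarrow> complex^2^2" where
  "Sdiag \<xi> = (\<chi> i j. if i = j then \<xi> i else 0)"

definition Ttorus :: "(complex^2^2) set" where
  "Ttorus = {Sdiag \<xi> | \<xi>. (\<forall>q. norm (\<xi> q) = 1) \<and> \<xi> 0 * \<xi> 1 = 1}"

definition Ttorus_pow :: "nat \<Rightarrow> (complex^2^2) set" where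
  "Ttorus_pow m = {S \<in> Ttorus. S [^]\<^bsub>mat_monoid\<^esub> ((2::nat)^m) = \<one>\<^bsub>mat_monoid\<^esub>}"

definition KQ :: "(complex^2^2) set \<Rightarrow> (complex^2^2) monoid" where
  "KQ Q = GL2\<lparr>carrier := generate GL2
      {S ** (Xshift [^]\<^bsub>mat_monoid\<^esub> b) | S b. S \<in> Q \<and> b < (2::nat)}\<rparr>"

text \<open>The dihedral group D_N of order N (N = 2n), concretely as Z_n \<rtimes> Z_2:
  (a,s)(b,t) = (a + (-1)^s b mod n, s + t mod 2); r = (1,0), s = (0,1).\<close>
definition dihedral_group :: "nat \<Rightarrow> (int \<times> int) monoid" where
  "dihedral_group N = (let n = int (N div 2) in
     \<lparr>carrier = {0..<n} \<times> {0,1},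
      mult = (\<lambda>(a,s) (b,t). ((a + (-1)^nat s * b) mod n, (s + t) mod 2)),
      one = (0,0)\<rparr>)"

end

theory Submission
  imports Defs
begin

lemma two_cases: "(x::2) = 0 \<or> x = 1"
  using exhaust_2[of x] by auto
lemma all2: "(\<forall>i::2. P i) \<longleftrightarrow> P 0 \<and> P 1"
  using two_cases by metis
lemma UNIV2: "(UNIV::2 set) = {0,1}" using two_cases by auto
lemma sum2: "sum f (UNIV::2 set) = f 0 + f 1" by (simp add: UNIV2)
lemma mat2_eq: "(A::complex^2^2) = B \<longleftrightarrow> A$0$0 = B$0$0 \<and> A$0$1 = B$0$1 \<and> A$1$0 = B$1$0 \<and> A$1$1 = B$1$1"
  by (simp only: vec_eq_iff all2 conj_assoc)

lemma mm_entry: "((A::complex^2^2) ** B)$i$j = A$i$0 * B$0$j + A$i$1 * B$1$j"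
  by (simp add: matrix_matrix_mult_def sum2)

lemma X_entries: "Xshift$0$0 = 0" "Xshift$0$1 = 1" "Xshift$1$0 = 1" "Xshift$1$1 = 0"
  by (simp_all add: Xshift_def)
lemma S_entries: "Sdiag f$0$0 = f 0" "Sdiag f$0$1 = 0" "Sdiag f$1$0 = 0" "Sdiag f$1$1 = f 1"
  by (simp_all add: Sdiag_def)
lemma one_entries: "(mat 1::complex^2^2)$0$0 = 1" "(mat 1::complex^2^2)$0$1 = 0" "(mat 1::complex^2^2)$1$0 = 0" "(mat 1::complex^2^2)$1$1 = 1"
  by (simp_all add: mat_def)

lemma SS: "Sdiag f ** Sdiag g = Sdiag (\<lambda>i. f i * g i)"
  by (simp add: mat2_eq mm_entry S_entries)
lemma XX: "Xshift ** Xshift = mat 1"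
  by (simp add: mat2_eq mm_entry X_entries one_entries)
lemma XS: "Xshift ** Sdiag f = Sdiag (\<lambda>i. if i = 0 then f 1 else f 0) ** Xshift"
  by (simp add: mat2_eq mm_entry X_entries S_entries)

lemma monoid_mat: "monoid mat_monoid"
  by unfold_locales (auto simp: mat_monoid_def matrix_mul_assoc)
lemma mm_simps: "carrier mat_monoid = UNIV" "mult mat_monoid = (\<lambda>A B. A ** B)" "one mat_monoid = mat 1"
  by (simp_all add: mat_monoid_def)
lemma Spow: "Sdiag f [^]\<^bsub>mat_monoid\<^esub> (k::nat) = Sdiag (\<lambda>i. f i ^ k)"
proof (induction k)
  case 0 then show ?case by (simp add: mm_simps mat2_eq S_entries one_entries)
next
  case (Suc k) then show ?case by (simp add: mm_simps SS mult.commute)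
qed

definition om :: "nat \<Rightarrow> complex" where "om n = exp(2 * of_real pi * \<i> / of_nat n)"

lemma om_pow: "om n ^ j = exp(2 * of_real pi * \<i> * of_nat j / of_nat n)"
  unfolding om_def by (metis exp_of_nat_mult times_divide_eq_right mult.commute mult.left_commute)

lemma om_nz: "om n \<noteq> 0" by (simp add: om_def)

lemma om_n: "n \<ge> 1 \<Longrightarrow> om n ^ n = 1"
  using complex_root_unity[of n 1] by (simp add: om_pow)

lemma norm_om: "norm (om n) = 1"
proof -
  have "om n = exp (\<i> * complex_of_real (2 * pi / real n))"
    unfolding om_def by (simp add: of_real_divide mult_ac)
  then show ?thesis by (simp only: norm_exp_i_times)
qed

lemma om_powi_mod: assumes "n \<ge> 1" shows "om n powi (k mod int n) = om n powi k"
proof -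
  have "k = int n * (k div int n) + k mod int n" by simp
  then have "om n powi k = om n powi (int n * (k div int n)) * om n powi (k mod int n)"
    by (metis om_nz power_int_add)
  also have "om n powi (int n * (k div int n)) = (om n powi int n) powi (k div int n)"
    by (simp add: power_int_mult)
  also have "om n powi int n = 1" using om_n[OF assms] by (simp add: power_int_of_nat)
  finally show ?thesis by simp
qed

definition E :: "nat \<Rightarrow> int \<Rightarrow> complex^2^2" where
  "E n k = Sdiag (\<lambda>i. if i = 0 then om n powi k else om n powi (-k))"

definition phi :: "nat \<Rightarrow> int \<times> int \<Rightarrow> complex^2^2" where
  "phi n x = E n (fst x) ** (if snd x = 0 then mat 1 else Xshift)"

lemma EE: "E n a ** E n b = E n (a + b)"
  unfolding E_def SS by (intro arg_cong[where f=Sdiag] ext) (simp add: power_int_add[symmetric] om_nz)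

lemma EE': "A ** E n a ** E n b = A ** E n (a + b)"
  by (metis EE matrix_mul_assoc)

lemma XE: "Xshift ** E n a = E n (-a) ** Xshift"
  unfolding E_def XS by (intro arg_cong[where f="\<lambda>f. Sdiag f ** Xshift"] ext) simp

lemma XE': "A ** Xshift ** E n a = A ** E n (-a) ** Xshift"
  by (metis XE matrix_mul_assoc)

lemma XX': "A ** Xshift ** Xshift = A"
  by (metis XX matrix_mul_assoc matrix_mul_rid)

lemma E0: "E n 0 = mat 1"
  by (simp add: E_def mat2_eq S_entries one_entries)

lemma E_mod: "n \<ge> 1 \<Longrightarrow> E n (k mod int n) = E n k"
  proof -
  assume n: "n \<ge> 1"
  have "om n powi (- (k mod int n)) = om n powi (- k)"
    by (metis n om_powi_mod om_nz power_int_minus)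
  then show ?thesis unfolding E_def using om_powi_mod[OF n, of k]
    by (intro arg_cong[where f=Sdiag] ext) simp
qed

definition dmult :: "nat \<Rightarrow> int \<times> int \<Rightarrow> int \<times> int \<Rightarrow> int \<times> int" where
  "dmult n = (\<lambda>(a,s) (b,t). ((a + (-1)^nat s * b) mod int n, (s + t) mod 2))"

lemma phi_hom:
  assumes "n \<ge> 1" "s \<in> {0,1}" "t \<in> {0,1}"
  shows "phi n (a,s) ** phi n (b,t) = phi n (dmult n (a,s) (b,t))"
proof -
  have m1: "E n k = E n (k mod int n)" for k using E_mod[OF assms(1)] by simp
  consider "s = 0" "t = 0" | "s = 0" "t = 1" | "s = 1" "t = 0" | "s = 1" "t = 1" using assms by auto
  then show ?thesis
  proof cases
    case 1 then show ?thesis by (simp add: phi_def dmult_def EE m1[of "a+b"])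
  next
    case 2 then show ?thesis by (simp add: phi_def dmult_def matrix_mul_assoc EE m1[of "a+b"])
  next
    case 3
    have "E n a ** Xshift ** E n b = E n (a - b) ** Xshift"
      by (simp add: XE' EE)
    with 3 show ?thesis by (simp add: phi_def dmult_def m1[of "a-b"])
  next
    case 4
    have "E n a ** Xshift ** (E n b ** Xshift) = E n (a - b)"
      by (simp only: matrix_mul_assoc XE' EE XX') simp
    with 4 show ?thesis by (simp add: phi_def dmult_def m1[of "a-b"])
  qed
qed

lemma phi_entries:
  "phi n (a,0) $ 0 $ 0 = om n powi a" "phi n (a,0) $ 0 $ 1 = 0"
  "phi n (a,1) $ 0 $ 0 = 0" "phi n (a,1) $ 0 $ 1 = om n powi a"
  by (simp_all add: phi_def E_def mm_entry S_entries X_entries one_entries)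

lemma om_powi_inj:
  assumes "n \<ge> 1" "0 \<le> a" "a < int n" "0 \<le> b" "b < int n" "om n powi a = om n powi b"
  shows "a = b"
proof -
  have "om n powi a = om n ^ nat a" "om n powi b = om n ^ nat b"
    using assms by (simp_all add: power_int_def)
  then have "nat a mod n = nat b mod n"
    using assms complex_root_unity_eq[of n "nat a" "nat b"] by (simp add: om_pow)
  then show ?thesis using assms by simp
qed

lemma phi_inj:
  assumes "n \<ge> 1"
  shows "inj_on (phi n) ({0..<int n} \<times> {0,1})"
proof (rule inj_onI, clarify)
  fix a s b t assume a: "a \<in> {0..<int n}" "s \<in> {0,1}" "b \<in> {0..<int n}" "t \<in> {0,1}"
    and eq: "phi n (a, s) = phi n (b, t)"
  have nz: "om n powi k \<noteq> 0" for k by (simp add: om_nz)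
  have st: "s = t"
  proof (rule ccontr)
    assume "s \<noteq> t"
    then have "(s = 0 \<and> t = 1) \<or> (s = 1 \<and> t = 0)" using a by auto
    then show False
    proof
      assume "s = 0 \<and> t = 1"
      then have "phi n (a,0) $ 0 $ 0 = phi n (b,1) $ 0 $ 0" using eq by simp
      then show False using nz by (simp add: phi_entries)
    next
      assume "s = 1 \<and> t = 0"
      then have "phi n (a,1) $ 0 $ 0 = phi n (b,0) $ 0 $ 0" using eq by simp
      then show False using nz[of b] by (simp add: phi_entries)
    qed
  qed
  then have "om n powi a = om n powi b" using a eq
  proof -
    have "s = 0 \<or> s = 1" using a by auto
    then show ?thesis
    proof
      assume "s = 0"
      then have "phi n (a,0) $ 0 $ 0 = phi n (b,0) $ 0 $ 0" using eq st by simp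
      then show ?thesis by (simp add: phi_entries)
    next
      assume "s = 1"
      then have "phi n (a,1) $ 0 $ 1 = phi n (b,1) $ 0 $ 1" using eq st by simp
      then show ?thesis by (simp add: phi_entries)
    qed
  qed
  then have eqab: "om n powi a = om n powi b" .
  have "0 \<le> a" "a < int n" "0 \<le> b" "b < int n" using a by auto
  then have "a = b" using om_powi_inj[OF assms _ _ _ _ eqab] by blast
  then show "a = b \<and> s = t" using st by simp
qed

lemma E_in_Q:
  assumes "n = 2^m"
  shows "E n a \<in> Ttorus_pow m"
proof -
  have n1: "n \<ge> 1" using assms by simp
  have nrm: "norm (om n powi k) = 1" for k by (simp add: norm_power_int norm_om)
  have "(om n powi k) ^ n = 1" for k
  proof -
    have "(om n powi k) ^ n = om n powi (k * int n)"
      by (simp add: power_int_mult power_int_of_nat)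
    also have "\<dots> = 1" using om_powi_mod[OF n1, of "k * int n"] by simp
    finally show ?thesis .
  qed
  then have "E n a [^]\<^bsub>mat_monoid\<^esub> n = \<one>\<^bsub>mat_monoid\<^esub>"
    unfolding E_def Spow by (simp add: mm_simps mat2_eq S_entries one_entries)
  moreover have "E n a \<in> Ttorus"
    unfolding Ttorus_def E_def using nrm
    by (auto simp: power_int_add[symmetric] om_nz intro!: exI[where x="\<lambda>i. if i = 0 then om n powi a else om n powi (-a)"])
  ultimately show ?thesis using assms by (simp add: Ttorus_pow_def)
qed

lemma Q_is_E:
  assumes "n = 2^m" "S \<in> Ttorus_pow m"
  shows "\<exists>j. 0 \<le> j \<and> j < int n \<and> S = E n j"
proof -
  have n1: "n \<ge> 1" using assms by simp
  obtain \<xi> where S: "S = Sdiag \<xi>" "\<xi> 0 * \<xi> 1 = 1" and p: "Sdiag \<xi> [^]\<^bsub>mat_monoid\<^esub> n = mat 1"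
    using assms unfolding Ttorus_pow_def Ttorus_def by (auto simp: mm_simps)
  have "\<xi> 0 ^ n = 1" using p unfolding Spow by (simp add: mat2_eq S_entries one_entries)
  then have "\<xi> 0 \<in> {z. z ^ n = 1}" by simp
  then obtain j where j: "j < n" "\<xi> 0 = om n ^ j"
    unfolding complex_roots_unity[OF n1] by (auto simp: om_pow)
  have x0: "\<xi> 0 = om n powi int j" using j by (simp add: power_int_of_nat)
  have x1: "\<xi> 1 = om n powi (- int j)"
    using S(2) x0 by (simp add: power_int_minus field_simps om_nz)
  have "S = E n (int j)"
    unfolding S E_def using x0 x1 by (intro arg_cong[where f=Sdiag] ext) (metis two_cases)
  then show ?thesis using j by (intro exI[of _ "int j"]) auto
qed

lemma Xpow: "Xshift [^]\<^bsub>mat_monoid\<^esub> (0::nat) = mat 1" "Xshift [^]\<^bsub>mat_monoid\<^esub> (1::nat) = Xshift"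
  by (simp_all add: mm_simps)

lemma gens_eq:
  assumes "n = 2^m"
  shows "{S ** (Xshift [^]\<^bsub>mat_monoid\<^esub> b) | S b. S \<in> Ttorus_pow m \<and> b < (2::nat)}
       = phi n ` ({0..<int n} \<times> {0,1})" (is "?G = ?I")
proof
  show "?G \<subseteq> ?I"
  proof (rule subsetI)
    fix x assume "x \<in> ?G"
    then obtain S and b :: nat where S: "S \<in> Ttorus_pow m" and b: "b < 2" and x: "x = S ** (Xshift [^]\<^bsub>mat_monoid\<^esub> b)"
      by blast
    obtain j where j: "0 \<le> j" "j < int n" "S = E n j" using Q_is_E[OF assms S] by blast
    have "b = 0 \<or> b = 1" using b by auto
    then show "x \<in> ?I"
    proof
      assume b0: "b = 0"
      have "x = phi n (j,0)" using b0 x j(3) by (simp add: phi_def mm_simps)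
      moreover have "(j,0) \<in> {0..<int n} \<times> {0,1}" using j by auto
      ultimately show ?thesis by (rule rev_image_eqI[rotated])
    next
      assume b1: "b = 1"
      have "x = phi n (j,1)" using b1 x j(3) by (simp add: phi_def mm_simps)
      moreover have "(j,1) \<in> {0..<int n} \<times> {0,1}" using j by auto
      ultimately show ?thesis by (rule rev_image_eqI[rotated])
    qed
  qed
next
  show "?I \<subseteq> ?G"
  proof (rule subsetI)
    fix x assume "x \<in> ?I"
    then obtain a s where x: "x = phi n (a,s)" "a \<in> {0..<int n}" "s \<in> {0::int,1}" by auto
    then have "s = 0 \<or> s = 1" by auto
    then have "phi n (a,s) \<in> ?G"
    proof
      assume s0: "s = 0"
      have "phi n (a,s) = E n a ** Xshift [^]\<^bsub>mat_monoid\<^esub> (0::nat)"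
        using s0 by (simp add: phi_def mm_simps)
      then show ?thesis using E_in_Q[OF assms, of a]
        by (simp only: mem_Collect_eq) (rule exI[of _ "E n a"], rule exI[of _ "0::nat"], simp)
    next
      assume s1: "s = 1"
      have "phi n (a,s) = E n a ** Xshift [^]\<^bsub>mat_monoid\<^esub> (1::nat)"
        using s1 by (simp add: phi_def mm_simps)
      then show ?thesis using E_in_Q[OF assms, of a]
        by (simp only: mem_Collect_eq) (rule exI[of _ "E n a"], rule exI[of _ "1::nat"], simp)
    qed
    then show "x \<in> ?G" using x(1) by simp
  qed
qed


lemma GL2_group: "group GL2"
  unfolding GL2_def by (rule monoid.units_group[OF monoid_mat])

lemma GL2_simps: "carrier GL2 = Units mat_monoid" "mult GL2 = (\<lambda>A B. A ** B)" "one GL2 = mat 1"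
  by (simp_all add: GL2_def units_of_def mm_simps)

definition dinv :: "nat \<Rightarrow> int \<times> int \<Rightarrow> int \<times> int" where
  "dinv n x = (if snd x = 0 then ((- fst x) mod int n, 0) else x)"

lemma dinv_props:
  assumes "n \<ge> 1" "x \<in> {0..<int n} \<times> {0,1}"
  shows "dinv n x \<in> {0..<int n} \<times> {0,1}" "dmult n x (dinv n x) = (0,0)" "dmult n (dinv n x) x = (0,0)"
proof -
  obtain a s where x: "x = (a,s)" "0 \<le> a" "a < int n" "s = 0 \<or> s = 1" using assms(2) by auto
  have np: "int n > 0" using assms(1) by simp
  from x(4) have "dinv n x \<in> {0..<int n} \<times> {0,1} \<and> dmult n x (dinv n x) = (0,0) \<and> dmult n (dinv n x) x = (0,0)"
  proof
    assume s: "s = 0"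
    have 1: "dinv n x = ((-a) mod int n, 0)" using x s by (simp add: dinv_def)
    have "(a + (-a) mod int n) mod int n = 0" by (simp add: mod_add_right_eq)
    moreover have "((-a) mod int n + a) mod int n = 0" by (simp add: mod_add_left_eq)
    moreover have "(-a) mod int n \<ge> 0" "(-a) mod int n < int n" using np by simp_all
    ultimately show ?thesis using x s 1 by (simp add: dmult_def)
  next
    assume s: "s = 1"
    have 1: "dinv n x = x" using x s by (simp add: dinv_def)
    show ?thesis using x s 1 by (simp add: dmult_def)
  qed
  then show "dinv n x \<in> {0..<int n} \<times> {0,1}" "dmult n x (dinv n x) = (0,0)" "dmult n (dinv n x) x = (0,0)"
    by auto
qed

lemma dmult_closed:
  assumes "n \<ge> 1" "x \<in> {0..<int n} \<times> {0,1}" "y \<in> {0..<int n} \<times> {0,1}"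
  shows "dmult n x y \<in> {0..<int n} \<times> {0,1}"
  using assms by (auto simp: dmult_def)

lemma phi00: "phi n (0,0) = mat 1" by (simp add: phi_def E0)

lemma phi_unit:
  assumes "n \<ge> 1" "x \<in> {0..<int n} \<times> {0,1}"
  shows "phi n x ** phi n (dinv n x) = mat 1" "phi n (dinv n x) ** phi n x = mat 1"
proof -
  obtain a s where x: "x = (a,s)" by (cases x)
  obtain b t where y: "dinv n x = (b,t)" by (cases "dinv n x")
  have "s \<in> {0,1}" "t \<in> {0,1}" using x y assms dinv_props(1)[OF assms] by auto
  then have h1: "phi n (a,s) ** phi n (b,t) = phi n (dmult n (a,s) (b,t))"
    and h2: "phi n (b,t) ** phi n (a,s) = phi n (dmult n (b,t) (a,s))"
    using phi_hom[OF assms(1)] by blast+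
  have "phi n x ** phi n (dinv n x) = phi n (dmult n x (dinv n x))"
    using h1 by (simp only: x(1)[symmetric] y[symmetric])
  then show "phi n x ** phi n (dinv n x) = mat 1"
    unfolding dinv_props(2)[OF assms] phi00 .
  have "phi n (dinv n x) ** phi n x = phi n (dmult n (dinv n x) x)"
    using h2 by (simp only: x(1)[symmetric] y[symmetric])
  then show "phi n (dinv n x) ** phi n x = mat 1"
    unfolding dinv_props(3)[OF assms] phi00 .
qed

lemma gens_subgroup:
  assumes "n \<ge> 1"
  shows "subgroup (phi n ` ({0..<int n} \<times> {0,1})) GL2"
proof -
  let ?C = "{0..<int n} \<times> {0::int,1}"
  have c: "phi n y \<in> carrier GL2" if "y \<in> ?C" for y
    unfolding GL2_simps Units_def mm_simps using phi_unit[OF assms that] by blast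
  show ?thesis
  proof
    show "phi n ` ?C \<subseteq> carrier GL2" using c by blast
    show "x \<otimes>\<^bsub>GL2\<^esub> y \<in> phi n ` ?C" if xyin: "x \<in> phi n ` ?C" "y \<in> phi n ` ?C" for x y
    proof -
      obtain p q where pq: "x = phi n p" "y = phi n q" "p \<in> ?C" "q \<in> ?C"
        using xyin by blast
      obtain a s where p: "p = (a,s)" by (cases p)
      obtain b t where q: "q = (b,t)" by (cases q)
      have xy: "x = phi n (a,s)" "y = phi n (b,t)" "(a,s) \<in> ?C" "(b,t) \<in> ?C"
        using pq p q by simp_all
      have st: "s \<in> {0,1}" "t \<in> {0,1}" using xy by auto
      have "x \<otimes>\<^bsub>GL2\<^esub> y = phi n (dmult n (a,s) (b,t))"
        unfolding GL2_simps xy(1,2) by (rule phi_hom[OF assms st])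
      moreover have "dmult n (a,s) (b,t) \<in> ?C" by (rule dmult_closed[OF assms xy(3,4)])
      ultimately show ?thesis by simp
    qed
    have "(0::int,0::int) \<in> ?C" using assms by simp
    then have "phi n (0,0) \<in> phi n ` ?C" by (rule imageI)
    then show "\<one>\<^bsub>GL2\<^esub> \<in> phi n ` ?C" by (simp only: GL2_simps phi00)
    show "inv\<^bsub>GL2\<^esub> x \<in> phi n ` ?C" if xin: "x \<in> phi n ` ?C" for x
    proof -
      obtain y where y: "x = phi n y" "y \<in> ?C" using xin by blast
      have d: "dinv n y \<in> ?C" by (rule dinv_props(1)[OF assms y(2)])
      have "inv\<^bsub>GL2\<^esub> (phi n y) = phi n (dinv n y)"
      proof (rule group.inv_equality[OF GL2_group])
        show "phi n (dinv n y) \<otimes>\<^bsub>GL2\<^esub> phi n y = \<one>\<^bsub>GL2\<^esub>"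
          unfolding GL2_simps by (rule phi_unit(2)[OF assms y(2)])
        show "phi n y \<in> carrier GL2" by (rule c[OF y(2)])
        show "phi n (dinv n y) \<in> carrier GL2" by (rule c[OF d])
      qed
      then show ?thesis using y(1) d by simp
    qed
  qed
qed

lemma iso_sym_weak:
  assumes "h \<in> iso G H" "\<And>x y. x \<in> carrier G \<Longrightarrow> y \<in> carrier G \<Longrightarrow> x \<otimes>\<^bsub>G\<^esub> y \<in> carrier G"
  shows "H \<cong> G"
proof -
  have h: "h \<in> hom G H" "bij_betw h (carrier G) (carrier H)"
    using assms by (auto simp add: iso_def bij_betw_inv_into)
  then have HG: "bij_betw (inv_into (carrier G) h) (carrier H) (carrier G)"
    by (simp add: bij_betw_inv_into)
  have "inv_into (carrier G) h \<in> hom H G"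
    unfolding hom_def
  proof safe
    show *: "\<And>x. x \<in> carrier H \<Longrightarrow> inv_into (carrier G) h x \<in> carrier G"
      by (meson HG bij_betwE)
    show "inv_into (carrier G) h (x \<otimes>\<^bsub>H\<^esub> y) = inv_into (carrier G) h x \<otimes>\<^bsub>G\<^esub> inv_into (carrier G) h y"
      if "x \<in> carrier H" "y \<in> carrier H" for x y
    proof (rule inv_into_f_eq)
      show "inj_on h (carrier G)"
        using bij_betw_def h(2) by blast
      show "inv_into (carrier G) h x \<otimes>\<^bsub>G\<^esub> inv_into (carrier G) h y \<in> carrier G"
        by (simp add: * that assms(2))
      show "h (inv_into (carrier G) h x \<otimes>\<^bsub>G\<^esub> inv_into (carrier G) h y) = x \<otimes>\<^bsub>H\<^esub> y"
        using h bij_betw_inv_into_right [of h] unfolding hom_def by (simp add: "*" that)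
    qed
  qed
  then have "inv_into (carrier G) h \<in> iso H G"
    by (simp add: Group.iso_def bij_betw_inv_into h)
  then show ?thesis unfolding is_iso_def by auto
qed

theorem lemma8:
  fixes m :: nat
  assumes "m \<ge> 1"
  shows "KQ (Ttorus_pow m) \<cong> dihedral_group (2 ^ (m + 1))"
proof -
  define n where "n = (2::nat)^m"
  have n1: "n \<ge> 1" by (simp add: n_def)
  let ?C = "{0..<int n} \<times> {0::int,1}"
  have gens: "{S ** (Xshift [^]\<^bsub>mat_monoid\<^esub> b) | S b. S \<in> Ttorus_pow m \<and> b < (2::nat)} = phi n ` ?C"
    using gens_eq[OF n_def] .
  have carrK: "carrier (KQ (Ttorus_pow m)) = phi n ` ?C"
  proof -
    have "generate GL2 (phi n ` ?C) = phi n ` ?C"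
    proof
      show "generate GL2 (phi n ` ?C) \<subseteq> phi n ` ?C"
        using group.generate_subgroup_incl[OF GL2_group _ gens_subgroup[OF n1]] by blast
      show "phi n ` ?C \<subseteq> generate GL2 (phi n ` ?C)"
        by (auto intro: generate.incl)
    qed
    then show ?thesis by (simp add: KQ_def gens)
  qed
  have multK: "mult (KQ (Ttorus_pow m)) = (\<lambda>A B. A ** B)"
    by (simp add: KQ_def GL2_simps)
  have D: "carrier (dihedral_group (2 ^ (m + 1))) = ?C" "mult (dihedral_group (2 ^ (m + 1))) = dmult n"
    by (simp_all add: dihedral_group_def Let_def n_def dmult_def)
  have "phi n \<in> iso (dihedral_group (2 ^ (m + 1))) (KQ (Ttorus_pow m))"
  proof (rule isoI)
    show "phi n \<in> hom (dihedral_group (2 ^ (m + 1))) (KQ (Ttorus_pow m))"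
      unfolding hom_def D carrK multK
    proof (intro CollectI conjI ballI)
      show "phi n \<in> ?C \<rightarrow> phi n ` ?C" by (rule funcsetI) (rule imageI)
      fix x y assume xy: "x \<in> ?C" "y \<in> ?C"
      obtain a s where p: "x = (a,s)" by (cases x)
      obtain b t where q: "y = (b,t)" by (cases y)
      have st: "s \<in> {0,1}" "t \<in> {0,1}" using xy p q by auto
      show "phi n (dmult n x y) = phi n x ** phi n y"
        unfolding p q by (rule phi_hom[OF n1 st, symmetric])
    qed
    show "bij_betw (phi n) (carrier (dihedral_group (2 ^ (m + 1)))) (carrier (KQ (Ttorus_pow m)))"
      unfolding bij_betw_def D carrK using phi_inj[OF n1] by simp
  qed
  then show ?thesis
  proof (rule iso_sym_weak)
    show "x \<otimes>\<^bsub>dihedral_group (2 ^ (m + 1))\<^esub> y \<in> carrier (dihedral_group (2 ^ (m + 1)))"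
      if "x \<in> carrier (dihedral_group (2 ^ (m + 1)))" "y \<in> carrier (dihedral_group (2 ^ (m + 1)))" for x y
      using that unfolding D by (rule dmult_closed[OF n1])
  qed
qed
end
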